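(* If a spherical curve $P$ has a trigon of type A, then $r(P)\le 2$.
   Context: A spherical curve is a smooth immersion $P:S^1\to S^2$ whose self-intersections are finitely many transverse double points, called crossings. It is oriented and has at least one crossing. Regions are the components of $S^2\setminus P(S^1)$, and edges are the arcs of the curve between consecutive crossings. A trigon is a region bounded by three edges. The Gauss word is the cyclic word of crossings met in one traversal of the curve; each crossing appears twice. Crossings $a,b$ are interlaced if their occurrences alternate $a\dots b\dots a\dots b$ in the cyclic word, i.e., their chords cross in the chord diagram. Let a trigon have crossings $x,y,z$. Each of its three edges gives a block of two consecutive letters in the Gauss word, one block on each of $\{x,y\}$, $\{y,z\}$, $\{z,x\}$, so the word has the form $B_1W_1B_2W_2B_3W_3$ with the $W_i$ free of $x,y,z$. The trigon's type is determined by how many of the three pairs among $x,y,z$ are interlaced: type A if exactly two pairs are interlaced; type B if exactly one; type C if all three (e.g. $xy\,W_1\,zx\,W_2\,yz\,W_3$, as in the trefoil curve); type D if none (e.g. $xy\,W_1\,yz\,W_2\,zx\,W_3$). A crossing is reducible if no crossing is interlaced with it; equivalently, only three distinct regions meet at it. $P$ is reducible if it has a reducible crossing. The inverse-half-twisted splice $I$ at a crossing $p$ takes the curve with cyclic Gauss word $p\,A\,p\,B$ to the curve with Gauss word $\overline{A}\,B$, where $\overline{A}$ is $A$ reversed. Geometrically, $p$ is smoothed in the unique way giving a single closed curve, and the result is re-oriented. The reductivity $r(P)$ is the minimal number of successive applications of $I$ needed to reach a reducible spherical curve; $r(P)=0$ if $P$ is reducible. *)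

theory Defs
  imports Main
begin

text \<open>
  A spherical curve is encoded by its Gauss word w (a list; the cyclic word is w read
  cyclically, position i being the i-th passage through a crossing) together with
  rotation data s.  Darts (half-edges) are pairs (i, b) with i < length w:
  (i, True) is the outgoing half-edge of passage i, (i, False) the incoming one.
  Edges of the curve join (i, True) with ((i+1) mod L, False).
  Around the crossing with passages i and j, the counterclockwise cyclic order of the
  four half-edges is  In_i, X_j, Out_i, Y_j  where X = Out iff s i; this forces
  s j = (\<not> s i).  Regions are the faces of the resulting map, i.e. the orbits of
  sigma o alpha; the map lies on the sphere iff V - E + F = 2, i.e. F = n + 2.
\<close>

definition partner :: "'a list \<Rightarrow> nat \<Rightarrow> nat" where
  "partner w i = (THE j. j < length w \<and> j \<noteq> i \<and> w ! j = w ! i)"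

definition darts :: "'a list \<Rightarrow> (nat \<times> bool) set" where
  "darts w = {0..<length w} \<times> UNIV"

definition alpha :: "'a list \<Rightarrow> nat \<times> bool \<Rightarrow> nat \<times> bool" where
  "alpha w d = (let L = length w; i = fst d in
     if snd d then ((i + 1) mod L, False) else ((i + L - 1) mod L, True))"

definition sigma :: "'a list \<Rightarrow> (nat \<Rightarrow> bool) \<Rightarrow> nat \<times> bool \<Rightarrow> nat \<times> bool" where
  "sigma w s d = (partner w (fst d), if snd d then \<not> s (fst d) else s (fst d))"

definition face_perm :: "'a list \<Rightarrow> (nat \<Rightarrow> bool) \<Rightarrow> nat \<times> bool \<Rightarrow> nat \<times> bool" where
  "face_perm w s = sigma w s \<circ> alpha w"

text \<open>The region (face) containing dart d, as the set of its boundary darts (one per corner).\<close>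
definition face_of :: "'a list \<Rightarrow> (nat \<Rightarrow> bool) \<Rightarrow> nat \<times> bool \<Rightarrow> (nat \<times> bool) set" where
  "face_of w s d = {(face_perm w s ^^ k) d | k. True}"

definition regions :: "'a list \<Rightarrow> (nat \<Rightarrow> bool) \<Rightarrow> (nat \<times> bool) set set" where
  "regions w s = face_of w s ` darts w"

definition spherical_curve :: "'a list \<Rightarrow> (nat \<Rightarrow> bool) \<Rightarrow> bool" where
  "spherical_curve w s \<longleftrightarrow>
     w \<noteq> [] \<and>
     (\<forall>a \<in> set w. count_list w a = 2) \<and>
     (\<forall>i < length w. s (partner w i) = (\<not> s i)) \<and>
     card (regions w s) = card (set w) + 2"

definition interlaced :: "'a list \<Rightarrow> 'a \<Rightarrow> 'a \<Rightarrow> bool" where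
  "interlaced w a b \<longleftrightarrow> a \<noteq> b \<and>
     (\<exists>i1 j1 i2 j2. i1 < j1 \<and> j1 < i2 \<and> i2 < j2 \<and> j2 < length w \<and>
        ((w ! i1 = a \<and> w ! i2 = a \<and> w ! j1 = b \<and> w ! j2 = b) \<or>
         (w ! i1 = b \<and> w ! i2 = b \<and> w ! j1 = a \<and> w ! j2 = a)))"

definition reducible_crossing :: "'a list \<Rightarrow> 'a \<Rightarrow> bool" where
  "reducible_crossing w a \<longleftrightarrow> a \<in> set w \<and> (\<forall>b. \<not> interlaced w a b)"

definition reducible :: "'a list \<Rightarrow> bool" where
  "reducible w \<longleftrightarrow> (\<exists>a. reducible_crossing w a)"

text \<open>Inverse-half-twisted splice: the cyclic word p A p B becomes rev A B.
  With w = U p A p V (linear representative), B = V U.\<close>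
definition splice :: "'a list \<Rightarrow> 'a \<Rightarrow> 'a list" where
  "splice w p = (let i1 = (LEAST i. i < length w \<and> w ! i = p);
                     i2 = (LEAST i. i1 < i \<and> i < length w \<and> w ! i = p);
                     U = take i1 w;
                     A = take (i2 - i1 - 1) (drop (i1 + 1) w);
                     V = drop (i2 + 1) w
                 in rev A @ V @ U)"

fun splice_seq :: "'a list \<Rightarrow> 'a list \<Rightarrow> 'a list option" where
  "splice_seq w [] = Some w"
| "splice_seq w (p # ps) = (if p \<in> set w then splice_seq (splice w p) ps else None)"

definition reductivity :: "'a list \<Rightarrow> nat" where
  "reductivity w = (LEAST k. \<exists>ps w'. length ps = k \<and> splice_seq w ps = Some w' \<and> reducible w')"

definition is_trigon :: "'a list \<Rightarrow> (nat \<Rightarrow> bool) \<Rightarrow> (nat \<times> bool) set \<Rightarrow> bool" where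
  "is_trigon w s R \<longleftrightarrow> R \<in> regions w s \<and> card R = 3"

definition trigon_crossings :: "'a list \<Rightarrow> (nat \<times> bool) set \<Rightarrow> 'a set" where
  "trigon_crossings w R = (\<lambda>d. w ! fst d) ` R"

definition trigon_type_A :: "'a list \<Rightarrow> (nat \<Rightarrow> bool) \<Rightarrow> (nat \<times> bool) set \<Rightarrow> bool" where
  "trigon_type_A w s R \<longleftrightarrow> is_trigon w s R \<and>
     (\<exists>x y z. distinct [x, y, z] \<and> trigon_crossings w R = {x, y, z} \<and>
        of_bool (interlaced w x y) + of_bool (interlaced w y z) + of_bool (interlaced w z x)
          = (2::nat))"

end

theory Submission
  imports Defs
begin


definition pat :: "'a list \<Rightarrow> 'a \<Rightarrow> 'a \<Rightarrow> bool" where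
  "pat w a b \<longleftrightarrow> (\<exists>i1 j1 i2 j2. i1 < j1 \<and> j1 < i2 \<and> i2 < j2 \<and> j2 < length w \<and>
     w ! i1 = a \<and> w ! j1 = b \<and> w ! i2 = a \<and> w ! j2 = b)"

lemma interlaced_pat: "interlaced w a b \<longleftrightarrow> a \<noteq> b \<and> (pat w a b \<or> pat w b a)"
  unfolding interlaced_def pat_def by blast

lemma interlaced_sym: "interlaced w a b = interlaced w b a"
  unfolding interlaced_pat by blast

lemma pat_cons_rot: "pat (c # t) a b \<Longrightarrow> pat (t @ [c]) a b \<or> pat (t @ [c]) b a"
proof -
  assume "pat (c # t) a b"
  then obtain i1 j1 i2 j2 where h: "i1 < j1" "j1 < i2" "i2 < j2" "j2 < length (c#t)"
     "(c#t) ! i1 = a" "(c#t) ! j1 = b" "(c#t) ! i2 = a" "(c#t) ! j2 = b"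
    unfolding pat_def by blast
  show ?thesis
  proof (cases "i1 = 0")
    case True
    then have "c = a" using h by simp
    have "pat (t @ [c]) b a" unfolding pat_def
      apply (rule exI[of _ "j1 - 1"], rule exI[of _ "i2 - 1"], rule exI[of _ "j2 - 1"], rule exI[of _ "length t"])
      using h True \<open>c = a\<close> by (auto simp: nth_append nth_Cons')
    then show ?thesis by blast
  next
    case False
    have "pat (t @ [c]) a b" unfolding pat_def
      apply (rule exI[of _ "i1 - 1"], rule exI[of _ "j1 - 1"], rule exI[of _ "i2 - 1"], rule exI[of _ "j2 - 1"])
      using h False by (auto simp: nth_append nth_Cons')
    then show ?thesis by blast
  qed
qed

lemma pat_snoc_rot: "pat (t @ [c]) a b \<Longrightarrow> pat (c # t) a b \<or> pat (c # t) b a"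
proof -
  assume "pat (t @ [c]) a b"
  then obtain i1 j1 i2 j2 where h: "i1 < j1" "j1 < i2" "i2 < j2" "j2 < length (t@[c])"
     "(t@[c]) ! i1 = a" "(t@[c]) ! j1 = b" "(t@[c]) ! i2 = a" "(t@[c]) ! j2 = b"
    unfolding pat_def by blast
  show ?thesis
  proof (cases "j2 = length t")
    case True
    then have "c = b" using h by simp
    have "pat (c # t) b a" unfolding pat_def
      apply (rule exI[of _ 0], rule exI[of _ "i1 + 1"], rule exI[of _ "j1 + 1"], rule exI[of _ "i2 + 1"])
      using h True \<open>c = b\<close> by (auto simp: nth_append)
    then show ?thesis by blast
  next
    case False
    have "pat (c # t) a b" unfolding pat_def
      apply (rule exI[of _ "i1 + 1"], rule exI[of _ "j1 + 1"], rule exI[of _ "i2 + 1"], rule exI[of _ "j2 + 1"])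
      using h False by (auto simp: nth_append)
    then show ?thesis by blast
  qed
qed

lemma interlaced_rotate1: "interlaced (rotate1 w) a b = interlaced w a b"
proof (cases w)
  case Nil then show ?thesis by simp
next
  case (Cons c t)
  then show ?thesis unfolding interlaced_pat using pat_cons_rot pat_snoc_rot by fastforce
qed

lemma pat_rev: "pat (rev w) a b \<Longrightarrow> pat w b a"
proof -
  assume "pat (rev w) a b"
  then obtain i1 j1 i2 j2 where h: "i1 < j1" "j1 < i2" "i2 < j2" "j2 < length w"
     "rev w ! i1 = a" "rev w ! j1 = b" "rev w ! i2 = a" "rev w ! j2 = b"
    unfolding pat_def by auto
  let ?L = "length w"
  show ?thesis unfolding pat_def
    apply (rule exI[of _ "?L - 1 - j2"], rule exI[of _ "?L - 1 - i2"], rule exI[of _ "?L - 1 - j1"], rule exI[of _ "?L - 1 - i1"])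
    using h by (auto simp: rev_nth)
qed

lemma interlaced_rev: "interlaced (rev w) a b = interlaced w a b"
  unfolding interlaced_pat using pat_rev[of w] pat_rev[of "rev w"] by auto




lemma reducible_crossing_rotate1: "reducible_crossing (rotate1 w) a = reducible_crossing w a"
  unfolding reducible_crossing_def by (simp add: interlaced_rotate1)
lemma reducible_crossing_rev: "reducible_crossing (rev w) a = reducible_crossing w a"
  unfolding reducible_crossing_def by (simp add: interlaced_rev)

definition step :: "'a list \<Rightarrow> 'a list \<Rightarrow> bool" where
  "step w v \<longleftrightarrow> v = rotate1 w \<or> v = rev w"

abbreviation wequiv :: "'a list \<Rightarrow> 'a list \<Rightarrow> bool" where
  "wequiv \<equiv> step\<^sup>*\<^sup>*"

lemma equiv_rotate: "wequiv w (rotate n w)"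
proof (induction n)
  case 0 then show ?case by simp
next
  case (Suc n) then show ?case by (simp add: rtranclp.rtrancl_into_rtrancl step_def)
qed

lemma equiv_rev: "wequiv w (rev w)"
  by (simp add: r_into_rtranclp step_def)

lemma step_sym: "step w v \<Longrightarrow> wequiv v w"
proof -
  assume "step w v"
  then consider "v = rotate1 w" | "v = rev w" unfolding step_def by blast
  then show ?thesis
  proof cases
    case 1
    have "rotate (length w - 1) v = w"
    proof (cases w)
      case Nil then show ?thesis using 1 by simp
    next
      case (Cons c t)
      have "rotate (length w - 1) v = rotate (Suc (length w - 1)) w"
        using 1 by (metis rotate1_rotate_swap rotate_Suc)
      also have "\<dots> = w" using Cons by (simp del: rotate_Suc)
      finally show ?thesis .
    qed
    then show ?thesis using equiv_rotate[of v "length w - 1"] by simp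
  next
    case 2 then show ?thesis using equiv_rev[of v] by simp
  qed
qed

lemma equiv_sym: "wequiv w v \<Longrightarrow> wequiv v w"
proof (induction rule: rtranclp_induct)
  case base then show ?case by simp
next
  case (step y z)
  then show ?case using step_sym by (meson rtranclp_trans)
qed

lemma equiv_invariant:
  assumes "\<And>x. P (rotate1 x) = P x" "\<And>x. P (rev x) = P x" "wequiv w v"
  shows "P v = P w"
  using assms(3) by (induction rule: rtranclp_induct) (auto simp: step_def assms(1,2))

lemma reducible_equiv: "wequiv w v \<Longrightarrow> reducible v = reducible w"
  unfolding reducible_def
  by (rule equiv_invariant) (auto simp: reducible_crossing_rotate1 reducible_crossing_rev)

lemma count_rotate1: "count_list (rotate1 x) a = count_list x a"
  by (cases x) auto

lemma count_equiv: "wequiv w v \<Longrightarrow> count_list v a = count_list w a"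
  by (rule equiv_invariant[where P="\<lambda>x. count_list x a"]) (auto simp: count_rotate1)

lemma set_equiv: "wequiv w v \<Longrightarrow> set v = set w"
  by (rule equiv_invariant[where P="set"]) auto

lemma splice_decomp:
  assumes "p \<notin> set U" "p \<notin> set A"
  shows "splice (U @ p # A @ p # V) p = rev A @ V @ U"
proof -
  let ?w = "U @ p # A @ p # V"
  have l1: "(LEAST i. i < length ?w \<and> ?w ! i = p) = length U"
  proof (rule Least_equality)
    show "length U < length ?w \<and> ?w ! length U = p" by simp
  next
    fix y assume "y < length ?w \<and> ?w ! y = p"
    then show "length U \<le> y" using assms(1)
      by (metis nth_append nth_mem not_le_imp_less)
  qed
  have l2: "(LEAST i. length U < i \<and> i < length ?w \<and> ?w ! i = p) = length U + 1 + length A"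
  proof (rule Least_equality)
    show "length U < length U + 1 + length A \<and> length U + 1 + length A < length ?w \<and> ?w ! (length U + 1 + length A) = p"
      by (simp add: nth_append)
  next
    fix y assume h: "length U < y \<and> y < length ?w \<and> ?w ! y = p"
    show "length U + 1 + length A \<le> y"
    proof (rule ccontr)
      assume nt: "\<not> ?thesis"
      then have "y - length U - 1 < length A" using h by auto
      moreover have "?w ! y = A ! (y - length U - 1)" using h nt
        by (auto simp: nth_append nth_Cons' split: if_splits)
      ultimately show False using h assms(2) by (metis nth_mem)
    qed
  qed
  show ?thesis unfolding splice_def Let_def l1 l2 by simp
qed

lemma count2_decomp:
  assumes "count_list w p = 2"
  shows "\<exists>U A V. w = U @ p # A @ p # V \<and> p \<notin> set U \<and> p \<notin> set A \<and> p \<notin> set V"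
proof -
  have "p \<in> set w" using assms by (metis count_list_0_iff zero_neq_numeral)
  then obtain U zs where 1: "w = U @ p # zs" "p \<notin> set U" using split_list_first by metis
  then have c: "count_list zs p = 1" using assms by (simp add: count_list_0_iff)
  then have "p \<in> set zs" by (metis count_list_0_iff one_neq_zero)
  then obtain A V where 2: "zs = A @ p # V" "p \<notin> set A" using split_list_first by metis
  then have "count_list V p = 0" using c by (simp add: count_list_0_iff)
  then show ?thesis using 1 2 by (auto simp: count_list_0_iff)
qed

lemma splice_rot1:
  assumes "count_list w p = 2"
  shows "wequiv (splice w p) (splice (rotate1 w) p)"
proof -
  obtain U A V where d: "w = U @ p # A @ p # V" "p \<notin> set U" "p \<notin> set A" "p \<notin> set V"
    using count2_decomp[OF assms] by blast
  show ?thesis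
  proof (cases U)
    case Nil
    have "rotate1 w = A @ p # V @ p # []" using d Nil by simp
    then have "splice (rotate1 w) p = rev V @ A" using splice_decomp[of p A V "[]"] d by simp
    moreover have "splice w p = rev A @ V" using splice_decomp[of p U A V] d Nil by simp
    ultimately show ?thesis using equiv_rev[of "rev A @ V"] by simp
  next
    case (Cons c U')
    have "rotate1 w = U' @ p # A @ p # (V @ [c])" using d Cons by simp
    then have "splice (rotate1 w) p = rev A @ V @ c # U'" using splice_decomp[of p U' A "V @ [c]"] d Cons by simp
    moreover have "splice w p = rev A @ V @ c # U'" using splice_decomp[of p U A V] d Cons by simp
    ultimately show ?thesis by simp
  qed
qed

lemma splice_rev:
  assumes "count_list w p = 2"
  shows "wequiv (splice w p) (splice (rev w) p)"
proof -
  obtain U A V where d: "w = U @ p # A @ p # V" "p \<notin> set U" "p \<notin> set A" "p \<notin> set V"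
    using count2_decomp[OF assms] by blast
  have "rev w = rev V @ p # rev A @ p # rev U" using d by simp
  then have e1: "splice (rev w) p = A @ rev U @ rev V" using splice_decomp[of p "rev V" "rev A" "rev U"] d by simp
  have e2: "splice w p = rev A @ V @ U" using splice_decomp[of p U A V] d by simp
  have "wequiv (rev A @ V @ U) (rev (rev A @ V @ U))" by (rule equiv_rev)
  moreover have "wequiv (rev (rev A @ V @ U)) (rotate (length (rev U @ rev V)) (rev (rev A @ V @ U)))"
    by (rule equiv_rotate)
  moreover have "rotate (length (rev U @ rev V)) (rev (rev A @ V @ U)) = A @ rev U @ rev V"
    using rotate_append[of "rev U @ rev V" A] by simp
  ultimately show ?thesis using e1 e2 by (metis rtranclp_trans)
qed

lemma splice_equiv:
  assumes "wequiv w v" "count_list w p = 2"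
  shows "wequiv (splice w p) (splice v p)"
  using assms
proof (induction rule: rtranclp_induct)
  case base then show ?case by simp
next
  case (step y z)
  have cy: "count_list y p = 2" using count_equiv[OF step(1)] step(4) by simp
  have "wequiv (splice y p) (splice z p)"
    using step(2) splice_rot1[OF cy] splice_rev[OF cy] unfolding step_def by blast
  then show ?case using step(3)[OF step(4)] by (meson rtranclp_trans)
qed

lemma splice_count:
  assumes "count_list w p = 2"
  shows "count_list (splice w p) a = (if a = p then 0 else count_list w a)"
    and "set (splice w p) = set w - {p}"
proof -
  obtain U A V where d: "w = U @ p # A @ p # V" "p \<notin> set U" "p \<notin> set A" "p \<notin> set V"
    using count2_decomp[OF assms] by blast
  have e: "splice w p = rev A @ V @ U" using splice_decomp[of p U A V] d by simp
  show "count_list (splice w p) a = (if a = p then 0 else count_list w a)"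
    using d e by (auto simp: count_list_0_iff)
  show "set (splice w p) = set w - {p}" using d e by auto
qed

lemma splice_seq_equiv:
  assumes "\<forall>a\<in>set w. count_list w a = 2" "wequiv w v" "splice_seq w ps = Some w'"
  shows "\<exists>v'. splice_seq v ps = Some v' \<and> wequiv w' v'"
  using assms
proof (induction ps arbitrary: w v)
  case Nil then show ?case by simp
next
  case (Cons p ps)
  have pw: "p \<in> set w" using Cons.prems(3) by (auto split: if_splits)
  have pv: "p \<in> set v" using pw set_equiv[OF Cons.prems(2)] by simp
  have c2: "count_list w p = 2" using Cons.prems(1) pw by blast
  have s: "splice_seq (splice w p) ps = Some w'" using Cons.prems(3) pw by simp
  have inv: "\<forall>a\<in>set (splice w p). count_list (splice w p) a = 2"
    using Cons.prems(1) splice_count[OF c2] by auto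
  obtain v' where "splice_seq (splice v p) ps = Some v'" "wequiv w' v'"
    using Cons.IH[OF inv splice_equiv[OF Cons.prems(2) c2] s] by blast
  then show ?case using pv by simp
qed




lemma not_interlaced_pos:
  assumes "\<forall>k<length w. w ! k = a \<longrightarrow> k = p1 \<or> k = p2"
    and "p2 = Suc p1 \<or> (p1 = 0 \<and> Suc p2 = length w)"
  shows "\<not> interlaced w a b"
proof
  assume "interlaced w a b"
  then have "pat w a b \<or> pat w b a" unfolding interlaced_pat by blast
  then show False
  proof
    assume "pat w a b"
    then obtain i1 j1 i2 j2 where h: "i1 < j1" "j1 < i2" "i2 < j2" "j2 < length w"
     "w ! i1 = a" "w ! i2 = a" unfolding pat_def by blast
    then have "i1 = p1 \<or> i1 = p2" "i2 = p1 \<or> i2 = p2" using assms(1) by auto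
    then show False using h assms(2) by auto
  next
    assume "pat w b a"
    then obtain i1 j1 i2 j2 where h: "i1 < j1" "j1 < i2" "i2 < j2" "j2 < length w"
     "w ! j1 = a" "w ! j2 = a" unfolding pat_def by blast
    then have "j1 = p1 \<or> j1 = p2" "j2 = p1 \<or> j2 = p2" using assms(1) by auto
    then show False using h assms(2) by auto
  qed
qed

lemma red_adj:
  assumes "a \<notin> set U" "a \<notin> set V"
  shows "reducible (U @ a # a # V)"
proof -
  let ?w = "U @ a # a # V"
  have "\<forall>k<length ?w. ?w ! k = a \<longrightarrow> k = length U \<or> k = Suc (length U)"
  proof (intro allI impI)
    fix k assume k: "k < length ?w" "?w ! k = a"
    show "k = length U \<or> k = Suc (length U)"
    proof (rule ccontr)
      assume n: "\<not> ?thesis"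
      show False
      proof (cases "k < length U")
        case True then have "?w ! k = U ! k" by (simp add: nth_append)
        then show ?thesis using k True assms(1) nth_mem by metis
      next
        case False
        have "k - length U - 2 < length V" using k n False by auto
        moreover have "?w ! k = V ! (k - length U - 2)" using k n False
          by (simp add: nth_append nth_Cons')
        ultimately show ?thesis using k(2) assms(2) nth_mem by metis
      qed
    qed
  qed
  then have "\<forall>b. \<not> interlaced ?w a b" using not_interlaced_pos[of ?w a "length U" "Suc (length U)"] by blast
  then show ?thesis unfolding reducible_def reducible_crossing_def by auto
qed

lemma red_ends:
  assumes "a \<notin> set V"
  shows "reducible (a # V @ [a])"
proof -
  let ?w = "a # V @ [a]"
  have "\<forall>k<length ?w. ?w ! k = a \<longrightarrow> k = 0 \<or> k = Suc (length V)"
  proof (intro allI impI)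
    fix k assume k: "k < length ?w" "?w ! k = a"
    show "k = 0 \<or> k = Suc (length V)"
    proof (rule ccontr)
      assume n: "\<not> ?thesis"
      then have "k - 1 < length V" "?w ! k = V ! (k - 1)" using k
        by (auto simp: nth_append nth_Cons' split: if_splits)
      then show False using k assms by (metis nth_mem)
    qed
  qed
  then have "\<forall>b. \<not> interlaced ?w a b" using not_interlaced_pos[of ?w a 0 "Suc (length V)"] by simp
  then show ?thesis unfolding reducible_def reducible_crossing_def by auto
qed

lemma pat_intro: "\<lbrakk>i1<j1; j1<i2; i2<j2; j2<length w; w!i1=a; w!j1=b; w!i2=a; w!j2=b\<rbrakk> \<Longrightarrow> pat w a b"
  unfolding pat_def by (intro exI[of _ i1] exI[of _ j1] exI[of _ i2] exI[of _ j2]) simp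

lemma interlaced_pos:
  assumes "a \<noteq> b" "a1 < a2" "a2 < length w" "b1 < b2" "b2 < length w"
    "w ! a1 = a" "w ! a2 = a" "w ! b1 = b" "w ! b2 = b"
    and oa: "\<forall>k<length w. w ! k = a \<longrightarrow> k = a1 \<or> k = a2"
    and ob: "\<forall>k<length w. w ! k = b \<longrightarrow> k = b1 \<or> k = b2"
  shows "interlaced w a b \<longleftrightarrow> (a1 < b1 \<and> b1 < a2 \<and> a2 < b2) \<or> (b1 < a1 \<and> a1 < b2 \<and> b2 < a2)"
proof
  assume "interlaced w a b"
  then have "pat w a b \<or> pat w b a" using interlaced_pat by metis
  then show "(a1 < b1 \<and> b1 < a2 \<and> a2 < b2) \<or> (b1 < a1 \<and> a1 < b2 \<and> b2 < a2)"
  proof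
    assume "pat w a b"
    then obtain i1 j1 i2 j2 where h: "i1 < j1" "j1 < i2" "i2 < j2" "j2 < length w"
     "w ! i1 = a" "w ! j1 = b" "w ! i2 = a" "w ! j2 = b" unfolding pat_def by (elim exE conjE) (rule that; assumption)
    have l: "i1 < length w" "j1 < length w" "i2 < length w" using h(1-4) by linarith+
    have "i1 = a1 \<or> i1 = a2" using oa[rule_format, OF l(1) h(5)] .
    moreover have "i2 = a1 \<or> i2 = a2" using oa[rule_format, OF l(3) h(7)] .
    moreover have "j1 = b1 \<or> j1 = b2" using ob[rule_format, OF l(2) h(6)] .
    moreover have "j2 = b1 \<or> j2 = b2" using ob[rule_format, OF h(4) h(8)] .
    ultimately show ?thesis using h(1-3) assms(2,4) by linarith
  next
    assume "pat w b a"
    then obtain i1 j1 i2 j2 where h: "i1 < j1" "j1 < i2" "i2 < j2" "j2 < length w"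
     "w ! i1 = b" "w ! j1 = a" "w ! i2 = b" "w ! j2 = a" unfolding pat_def by (elim exE conjE) (rule that; assumption)
    have l: "i1 < length w" "j1 < length w" "i2 < length w" using h(1-4) by linarith+
    have "i1 = b1 \<or> i1 = b2" using ob[rule_format, OF l(1) h(5)] .
    moreover have "i2 = b1 \<or> i2 = b2" using ob[rule_format, OF l(3) h(7)] .
    moreover have "j1 = a1 \<or> j1 = a2" using oa[rule_format, OF l(2) h(6)] .
    moreover have "j2 = a1 \<or> j2 = a2" using oa[rule_format, OF h(4) h(8)] .
    ultimately show ?thesis using h(1-3) assms(2,4) by linarith
  qed
next
  assume "(a1 < b1 \<and> b1 < a2 \<and> a2 < b2) \<or> (b1 < a1 \<and> a1 < b2 \<and> b2 < a2)"
  then have "pat w a b \<or> pat w b a"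
  proof
    assume H: "a1 < b1 \<and> b1 < a2 \<and> a2 < b2"
    have "pat w a b" by (rule pat_intro[of a1 b1 a2 b2]) (use H assms(2-9) in simp_all)
    then show ?thesis ..
  next
    assume H: "b1 < a1 \<and> a1 < b2 \<and> b2 < a2"
    have "pat w b a" by (rule pat_intro[of b1 a1 b2 a2]) (use H assms(2-9) in simp_all)
    then show ?thesis ..
  qed
  then show "interlaced w a b" using assms(1) by (simp add: interlaced_pat)
qed

lemma splice_seq2:
  "splice_seq w [p, q] = (if p \<in> set w then (if q \<in> set (splice w p) then Some (splice (splice w p) q) else None) else None)"
  by simp

lemma drop_split: "n \<le> m \<Longrightarrow> drop n w = take (m - n) (drop n w) @ drop m w"
  by (metis append_take_drop_id drop_drop le_add_diff_inverse2)

lemma set_take_drop_free: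
  assumes "\<forall>k<length w. n \<le> k \<and> k < m \<longrightarrow> w ! k \<notin> S"
  shows "\<forall>c \<in> set (take (m - n) (drop n w)). c \<notin> S"
proof
  fix c assume "c \<in> set (take (m - n) (drop n w))"
  then obtain i where "i < length (take (m - n) (drop n w))" "take (m - n) (drop n w) ! i = c"
    by (metis in_set_conv_nth)
  then show "c \<notin> S" using assms by auto
qed

lemma set_drop_free:
  assumes "\<forall>k<length w. n \<le> k \<longrightarrow> w ! k \<notin> S"
  shows "\<forall>c \<in> set (drop n w). c \<notin> S"
proof
  fix c assume "c \<in> set (drop n w)"
  then obtain i where "i < length (drop n w)" "drop n w ! i = c"
    by (metis in_set_conv_nth)
  then show "c \<notin> S" using assms by auto
qed




lemma decomp6:
  assumes "1 < q" "Suc q < r" "Suc r < length w"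
  shows "w = w!0 # w!1 # take (q - 2) (drop 2 w) @ w!q # w!Suc q # take (r - Suc (Suc q)) (drop (Suc (Suc q)) w)
             @ w!r # w!Suc r # drop (Suc (Suc r)) w"
proof -
  have c: "\<And>i. i < length w \<Longrightarrow> drop i w = w!i # drop (Suc i) w"
    by (simp add: Cons_nth_drop_Suc)
  have ne: "w \<noteq> []" using assms(3) by auto
  have "w = w!0 # w!1 # drop 2 w" using assms ne c[of 0] c[of 1] by (simp add: numeral_2_eq_2)
  moreover have "drop 2 w = take (q - 2) (drop 2 w) @ drop q w" using assms drop_split[of 2 q w] by simp
  moreover have "drop q w = w!q # w!Suc q # drop (Suc (Suc q)) w" using assms c[of q] c[of "Suc q"] by simp
  moreover have "drop (Suc (Suc q)) w = take (r - Suc (Suc q)) (drop (Suc (Suc q)) w) @ drop r w"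
    using assms drop_split[of "Suc (Suc q)" r w] by simp
  moreover have "drop r w = w!r # w!Suc r # drop (Suc (Suc r)) w" using assms c[of r] c[of "Suc r"] by simp
  ultimately show ?thesis by simp
qed

lemma pick2:
  assumes "(w!i = a \<and> w!Suc i = b) \<or> (w!i = b \<and> w!Suc i = a)" "a \<noteq> b"
  obtains p where "p \<in> {i, Suc i}" "w!p = a" "\<And>k. k \<in> {i, Suc i} \<Longrightarrow> w!k = a \<Longrightarrow> k = p"
proof (cases "w!i = a")
  case True
  show ?thesis by (rule that[of i]) (use True assms in auto)
next
  case False
  show ?thesis by (rule that[of "Suc i"]) (use False assms in auto)
qed

lemma block:
  fixes w :: "'a list"
  assumes dxyz: "distinct [x, y, z]"
    and L: "1 < q" "Suc q < r" "Suc r < length w"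
    and b1: "(w!0 = x \<and> w!1 = y) \<or> (w!0 = y \<and> w!1 = x)"
    and b2: "(w!q = y \<and> w!Suc q = z) \<or> (w!q = z \<and> w!Suc q = y)"
    and b3: "(w!r = z \<and> w!Suc r = x) \<or> (w!r = x \<and> w!Suc r = z)"
    and occ: "\<forall>k<length w. w!k \<in> {x,y,z} \<longrightarrow> k \<in> {0, 1, q, Suc q, r, Suc r}"
    and sum: "of_bool (interlaced w x y) + of_bool (interlaced w y z) + of_bool (interlaced w z x) = (2::nat)"
  shows "\<exists>ps w'. length ps \<le> 2 \<and> splice_seq w ps = Some w' \<and> reducible w'"
proof -
  define W1 where "W1 = take (q - 2) (drop 2 w)"
  define W2 where "W2 = take (r - Suc (Suc q)) (drop (Suc (Suc q)) w)"
  define W3 where "W3 = drop (Suc (Suc r)) w"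
  have dec: "w = w!0 # w!1 # W1 @ w!q # w!Suc q # W2 @ w!r # w!Suc r # W3"
    unfolding W1_def W2_def W3_def using decomp6[OF L] .
  have occ2: "\<And>k. k < length w \<Longrightarrow> w!k \<in> {x,y,z} \<Longrightarrow> k = 0 \<or> k = 1 \<or> k = q \<or> k = Suc q \<or> k = r \<or> k = Suc r"
    using occ by blast
  have r1: "w!k \<notin> {x,y,z}" if "k < length w" "2 \<le> k" "k < q" for k
  proof
    assume "w!k \<in> {x,y,z}"
    from occ2[OF that(1) this] show False using that L by arith
  qed
  have r2: "w!k \<notin> {x,y,z}" if "k < length w" "Suc (Suc q) \<le> k" "k < r" for k
  proof
    assume "w!k \<in> {x,y,z}"
    from occ2[OF that(1) this] show False using that L by arith
  qed
  have r3: "w!k \<notin> {x,y,z}" if "k < length w" "Suc (Suc r) \<le> k" for k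
  proof
    assume "w!k \<in> {x,y,z}"
    from occ2[OF that(1) this] show False using that L by arith
  qed
  have f1: "\<forall>c\<in>set W1. c \<notin> {x,y,z}" unfolding W1_def
    by (rule set_take_drop_free) (use r1 in simp)
  have f2: "\<forall>c\<in>set W2. c \<notin> {x,y,z}" unfolding W2_def
    by (rule set_take_drop_free) (use r2 in simp)
  have f3: "\<forall>c\<in>set W3. c \<notin> {x,y,z}" unfolding W3_def
    by (rule set_drop_free) (use r3 in simp)
  have dx: "x \<noteq> y" "x \<noteq> z" "y \<noteq> z" using dxyz by auto
  have ox: "k = 0 \<or> k = 1 \<or> k = r \<or> k = Suc r" if "k < length w" "w!k = x" for k
  proof -
    have "k = 0 \<or> k = 1 \<or> k = q \<or> k = Suc q \<or> k = r \<or> k = Suc r" using occ2[OF that(1)] that(2) by simp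
    moreover have "k \<noteq> q" using b2 that(2) dx by (cases "k = q") auto
    moreover have "k \<noteq> Suc q" using b2 that(2) dx by (cases "k = Suc q") auto
    ultimately show ?thesis by blast
  qed
  have oy: "k = 0 \<or> k = 1 \<or> k = q \<or> k = Suc q" if "k < length w" "w!k = y" for k
  proof -
    have "k = 0 \<or> k = 1 \<or> k = q \<or> k = Suc q \<or> k = r \<or> k = Suc r" using occ2[OF that(1)] that(2) by simp
    moreover have "k \<noteq> r" using b3 that(2) dx by (cases "k = r") auto
    moreover have "k \<noteq> Suc r" using b3 that(2) dx by (cases "k = Suc r") auto
    ultimately show ?thesis by blast
  qed
  have oz: "k = q \<or> k = Suc q \<or> k = r \<or> k = Suc r" if "k < length w" "w!k = z" for k
  proof -
    have "k = 0 \<or> k = 1 \<or> k = q \<or> k = Suc q \<or> k = r \<or> k = Suc r" using occ2[OF that(1)] that(2) by simp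
    moreover have "k \<noteq> 0" using b1 that(2) dx by (cases "k = 0") auto
    moreover have "k \<noteq> 1" using b1 that(2) dx by (cases "k = 1") auto
    ultimately show ?thesis by blast
  qed
  have e1: "(w!0 = x \<and> w!Suc 0 = y) \<or> (w!0 = y \<and> w!Suc 0 = x)" using b1 by simp
  have e1': "(w!0 = y \<and> w!Suc 0 = x) \<or> (w!0 = x \<and> w!Suc 0 = y)" using e1 by blast
  have e2: "(w!q = y \<and> w!Suc q = z) \<or> (w!q = z \<and> w!Suc q = y)" using b2 by simp
  have e2': "(w!q = z \<and> w!Suc q = y) \<or> (w!q = y \<and> w!Suc q = z)" using b2 by blast
  have e3: "(w!r = z \<and> w!Suc r = x) \<or> (w!r = x \<and> w!Suc r = z)" using b3 by simp
  have e3': "(w!r = x \<and> w!Suc r = z) \<or> (w!r = z \<and> w!Suc r = x)" using b3 by blast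
  have dx': "y \<noteq> x" "z \<noteq> x" "z \<noteq> y" using dx by auto
  obtain x1 where X1: "x1 \<in> {0, Suc 0}" "w!x1 = x" "\<And>k. k \<in> {0, Suc 0} \<Longrightarrow> w!k = x \<Longrightarrow> k = x1"
    by (rule pick2[OF e1 dx(1)]) (rule that)
  obtain y1 where Y1: "y1 \<in> {0, Suc 0}" "w!y1 = y" "\<And>k. k \<in> {0, Suc 0} \<Longrightarrow> w!k = y \<Longrightarrow> k = y1"
    by (rule pick2[OF e1' dx'(1)]) (rule that)
  obtain y2 where Y2: "y2 \<in> {q, Suc q}" "w!y2 = y" "\<And>k. k \<in> {q, Suc q} \<Longrightarrow> w!k = y \<Longrightarrow> k = y2"
    by (rule pick2[OF e2 dx(3)]) (rule that)
  obtain z1 where Z1: "z1 \<in> {q, Suc q}" "w!z1 = z" "\<And>k. k \<in> {q, Suc q} \<Longrightarrow> w!k = z \<Longrightarrow> k = z1"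
    by (rule pick2[OF e2' dx'(3)]) (rule that)
  obtain z2 where Z2: "z2 \<in> {r, Suc r}" "w!z2 = z" "\<And>k. k \<in> {r, Suc r} \<Longrightarrow> w!k = z \<Longrightarrow> k = z2"
    by (rule pick2[OF e3 dx'(2)]) (rule that)
  obtain x2 where X2: "x2 \<in> {r, Suc r}" "w!x2 = x" "\<And>k. k \<in> {r, Suc r} \<Longrightarrow> w!k = x \<Longrightarrow> k = x2"
    by (rule pick2[OF e3' dx(2)]) (rule that)
  have OX: "\<forall>k<length w. w!k = x \<longrightarrow> k = x1 \<or> k = x2"
  proof (intro allI impI)
    fix k assume k: "k < length w" "w!k = x"
    from ox[OF k] have "k \<in> {0, Suc 0} \<or> k \<in> {r, Suc r}" by auto
    then show "k = x1 \<or> k = x2" using X1(3) X2(3) k(2) by blast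
  qed
  have OY: "\<forall>k<length w. w!k = y \<longrightarrow> k = y1 \<or> k = y2"
  proof (intro allI impI)
    fix k assume k: "k < length w" "w!k = y"
    from oy[OF k] have "k \<in> {0, Suc 0} \<or> k \<in> {q, Suc q}" by auto
    then show "k = y1 \<or> k = y2" using Y1(3) Y2(3) k(2) by blast
  qed
  have OZ: "\<forall>k<length w. w!k = z \<longrightarrow> k = z1 \<or> k = z2"
  proof (intro allI impI)
    fix k assume k: "k < length w" "w!k = z"
    from oz[OF k] have "k \<in> {q, Suc q} \<or> k \<in> {r, Suc r}" by auto
    then show "k = z1 \<or> k = z2" using Z1(3) Z2(3) k(2) by blast
  qed
  have R: "x1 \<le> 1" "y1 \<le> 1" "q \<le> y2" "y2 \<le> Suc q" "q \<le> z1" "z1 \<le> Suc q"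
     "r \<le> z2" "z2 \<le> Suc r" "r \<le> x2" "x2 \<le> Suc r"
    using X1(1) Y1(1) Y2(1) Z1(1) Z2(1) X2(1) by auto
  have ixy: "interlaced w x y \<longleftrightarrow> w!0 = y"
  proof -
    have "interlaced w x y \<longleftrightarrow> (x1 < y1 \<and> y1 < x2 \<and> x2 < y2) \<or> (y1 < x1 \<and> x1 < y2 \<and> y2 < x2)"
      by (rule interlaced_pos[OF dx(1) _ _ _ _ X1(2) X2(2) Y1(2) Y2(2) OX OY]) (use R L in linarith)+
    also have "\<dots> \<longleftrightarrow> y1 < x1" using R L by linarith
    also have "\<dots> \<longleftrightarrow> w!0 = y"
    proof
      assume "y1 < x1" then have "y1 = 0" using R by linarith
      then show "w!0 = y" using Y1(2) by simp
    next
      assume "w!0 = y" then have "y1 = 0" using Y1(3)[of 0] by simp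
      moreover have "x1 \<noteq> 0" using X1(2) \<open>w!0 = y\<close> dx(1) by (cases "x1 = 0") auto
      ultimately show "y1 < x1" by simp
    qed
    finally show ?thesis .
  qed
  have iyz: "interlaced w y z \<longleftrightarrow> w!q = z"
  proof -
    have "interlaced w y z \<longleftrightarrow> (y1 < z1 \<and> z1 < y2 \<and> y2 < z2) \<or> (z1 < y1 \<and> y1 < z2 \<and> z2 < y2)"
      by (rule interlaced_pos[OF dx(3) _ _ _ _ Y1(2) Y2(2) Z1(2) Z2(2) OY OZ]) (use R L in linarith)+
    also have "\<dots> \<longleftrightarrow> z1 < y2" using R L by linarith
    also have "\<dots> \<longleftrightarrow> w!q = z"
    proof
      assume "z1 < y2" then have "z1 = q" using R by linarith
      then show "w!q = z" using Z1(2) by simp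
    next
      assume "w!q = z" then have "z1 = q" using Z1(3)[of q] by simp
      moreover have "y2 \<noteq> q" using Y2(2) \<open>w!q = z\<close> dx(3) by (cases "y2 = q") auto
      ultimately show "z1 < y2" using R by linarith
    qed
    finally show ?thesis .
  qed
  have izx: "interlaced w z x \<longleftrightarrow> w!r = x"
  proof -
    have "interlaced w z x \<longleftrightarrow> (z1 < x1 \<and> x1 < z2 \<and> z2 < x2) \<or> (x1 < z1 \<and> z1 < x2 \<and> x2 < z2)"
      by (rule interlaced_pos[OF dx'(2) _ _ _ _ Z1(2) Z2(2) X1(2) X2(2) OZ OX]) (use R L in linarith)+
    also have "\<dots> \<longleftrightarrow> x2 < z2" using R L by linarith
    also have "\<dots> \<longleftrightarrow> w!r = x"
    proof
      assume "x2 < z2" then have "x2 = r" using R by linarith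
      then show "w!r = x" using X2(2) by simp
    next
      assume "w!r = x" then have "x2 = r" using X2(3)[of r] by simp
      moreover have "z2 \<noteq> r" using Z2(2) \<open>w!r = x\<close> dx(2) by (cases "z2 = r") auto
      ultimately show "x2 < z2" using R by linarith
    qed
    finally show ?thesis .
  qed
  have fx: "x \<notin> set W1" "x \<notin> set W2" "x \<notin> set W3" using f1 f2 f3 by auto
  have fy: "y \<notin> set W1" "y \<notin> set W2" "y \<notin> set W3" using f1 f2 f3 by auto
  have fz: "z \<notin> set W1" "z \<notin> set W2" "z \<notin> set W3" using f1 f2 f3 by auto
  consider "w!0 = y" "w!q = z" "w!r \<noteq> x" | "w!0 = y" "w!q \<noteq> z" "w!r = x" | "w!0 \<noteq> y" "w!q = z" "w!r = x"
    using sum unfolding ixy iyz izx by (cases "w!0 = y"; cases "w!q = z"; cases "w!r = x") auto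
  then show ?thesis
  proof cases
    case 1
    then have w: "w = (y # x # W1) @ z # (y # W2) @ z # (x # W3)" using dec b1 b2 b3 dx by auto
    have s1: "splice w z = rev W2 @ y # (x # W3) @ y # (x # W1)"
      using splice_decomp[of z "y # x # W1" "y # W2" "x # W3"] w fz dx dx' by simp
    have s2: "splice (splice w z) y = rev W3 @ x # x # (W1 @ rev W2)"
      using splice_decomp[of y "rev W2" "x # W3" "x # W1"] s1 fy dx dx' by simp
    have "length [z, y] \<le> 2 \<and> splice_seq w [z, y] = Some (rev W3 @ x # x # (W1 @ rev W2))
          \<and> reducible (rev W3 @ x # x # (W1 @ rev W2))"
      using s1 s2 w red_adj[of x "rev W3" "W1 @ rev W2"] fx by simp
    then show ?thesis by blast
  next
    case 2
    then have w: "w = [] @ y # (x # W1) @ y # (z # W2 @ x # z # W3)" using dec b1 b2 b3 dx by auto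
    have s1: "splice w y = rev W1 @ x # (z # W2) @ x # (z # W3)"
      using splice_decomp[of y "[]" "x # W1" "z # W2 @ x # z # W3"] w fy dx dx' by simp
    have s2: "splice (splice w y) x = rev W2 @ z # z # (W3 @ rev W1)"
      using splice_decomp[of x "rev W1" "z # W2" "z # W3"] s1 fx dx dx' by simp
    have "length [y, x] \<le> 2 \<and> splice_seq w [y, x] = Some (rev W2 @ z # z # (W3 @ rev W1))
          \<and> reducible (rev W2 @ z # z # (W3 @ rev W1))"
      using s1 s2 w red_adj[of z "rev W2" "W3 @ rev W1"] fz by simp
    then show ?thesis by blast
  next
    case 3
    then have w: "w = [] @ x # (y # W1 @ z # y # W2) @ x # (z # W3)" using dec b1 b2 b3 dx by auto
    have s1: "splice w x = (rev W2 @ [y]) @ z # (rev W1 @ [y]) @ z # W3"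
      using splice_decomp[of x "[]" "y # W1 @ z # y # W2" "z # W3"] w fx dx dx' by simp
    have s2: "splice (splice w x) z = y # (W1 @ W3 @ rev W2) @ [y]"
      using splice_decomp[of z "rev W2 @ [y]" "rev W1 @ [y]" W3] s1 fz dx dx' by simp
    have "length [x, z] \<le> 2 \<and> splice_seq w [x, z] = Some (y # (W1 @ W3 @ rev W2) @ [y])
          \<and> reducible (y # (W1 @ W3 @ rev W2) @ [y])"
      using s1 s2 w red_ends[of y "W1 @ W3 @ rev W2"] fy by simp
    then show ?thesis by blast
  qed
qed




lemma occ_two:
  assumes "count_list w a = 2" "p \<noteq> p'" "p < length w" "p' < length w" "w!p = a" "w!p' = a"
    "k < length w" "w!k = a"
  shows "k = p \<or> k = p'"
proof (rule ccontr)
  assume n: "\<not> ?thesis"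
  let ?S = "{i. i < length w \<and> a = w!i}"
  have c: "card ?S = 2"
    using assms(1) unfolding count_list_eq_length_filter length_filter_conv_card .
  have s: "{p, p', k} \<subseteq> ?S" using assms(3-8) by simp
  have c3: "card {p, p', k} = 3" using n assms(2) by simp
  have "card {p, p', k} \<le> card ?S" by (rule card_mono[OF _ s]) simp
  then show False using c c3 by simp
qed

lemma interlaced_equiv: "wequiv w v \<Longrightarrow> interlaced v a b = interlaced w a b"
  by (rule equiv_invariant[where P="\<lambda>x. interlaced x a b"]) (auto simp: interlaced_rotate1 interlaced_rev)

lemma mod_lt2: "(a::nat) < 2 * L \<Longrightarrow> a mod L = (if a < L then a else a - L)"
  by (simp add: mod_if)


lemma edge:
  assumes "i < L" "j < L" "j = Suc i mod L \<or> i = Suc j mod L"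
  obtains t where "t < L" "(t = i \<and> Suc t mod L = j) \<or> (t = j \<and> Suc t mod L = i)"
  using assms by blast

lemma arith6:
  fixes q r L :: nat
  assumes "distinct [0, 1, q, Suc q mod L, r, Suc r mod L]" "q < L" "r < L" "1 < L"
  shows "1 < q \<and> Suc q < L \<and> 1 < r \<and> Suc r < L \<and> Suc q mod L = Suc q \<and> Suc r mod L = Suc r \<and> (Suc q < r \<or> Suc r < q)"
proof -
  have "Suc q \<noteq> L" using assms(1) by (cases "Suc q = L") auto
  then have q: "Suc q < L" using assms(2) by linarith
  have "Suc r \<noteq> L" using assms(1) by (cases "Suc r = L") auto
  then have r: "Suc r < L" using assms(3) by linarith
  have "distinct [0, 1, q, Suc q, r, Suc r]" using assms(1) q r by simp
  then show ?thesis using q r by auto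
qed

lemma core:
  fixes w :: "'a list"
  assumes cnt: "\<forall>a\<in>set w. count_list w a = 2"
    and dc: "distinct [c0, c1, c2]"
    and lt: "i0 < length w" "j0 < length w" "i1 < length w" "j1 < length w" "i2 < length w" "j2 < length w"
    and lw: "w!i0 = c0" "w!j0 = c1" "w!i1 = c1" "w!j1 = c2" "w!i2 = c2" "w!j2 = c0"
    and ad: "j0 = Suc i0 mod length w \<or> i0 = Suc j0 mod length w"
            "j1 = Suc i1 mod length w \<or> i1 = Suc j1 mod length w"
            "j2 = Suc i2 mod length w \<or> i2 = Suc j2 mod length w"
    and ne: "j0 \<noteq> i1" "j1 \<noteq> i2" "j2 \<noteq> i0"
    and sum: "of_bool (interlaced w c0 c1) + of_bool (interlaced w c1 c2) + of_bool (interlaced w c2 c0) = (2::nat)"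
  shows "\<exists>ps w'. length ps \<le> 2 \<and> splice_seq w ps = Some w' \<and> reducible w'"
proof -
  define L where "L = length w"
  have dc': "c0 \<noteq> c1" "c1 \<noteq> c2" "c0 \<noteq> c2" "c1 \<noteq> c0" "c2 \<noteq> c1" "c2 \<noteq> c0" using dc by auto
  have cn0: "count_list w c0 = 2" using cnt lt(1) lw(1) nth_mem by metis
  have cn1: "count_list w c1 = 2" using cnt lt(3) lw(3) nth_mem by metis
  have cn2: "count_list w c2 = 2" using cnt lt(5) lw(5) nth_mem by metis
  have oc0: "k = i0 \<or> k = j2" if "k < L" "w!k = c0" for k
    by (rule occ_two[OF cn0 not_sym[OF ne(3)] lt(1) lt(6) lw(1) lw(6)]) (use that L_def in simp_all)
  have oc1: "k = j0 \<or> k = i1" if "k < L" "w!k = c1" for k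
    by (rule occ_two[OF cn1 ne(1) lt(2) lt(3) lw(2) lw(3)]) (use that L_def in simp_all)
  have oc2: "k = j1 \<or> k = i2" if "k < L" "w!k = c2" for k
    by (rule occ_two[OF cn2 ne(2) lt(4) lt(5) lw(4) lw(5)]) (use that L_def in simp_all)
  have L2: "2 \<le> L"
  proof -
    have "i0 \<noteq> j0" using lw(1,2) dc'(1) by (cases "i0 = j0") auto
    then show ?thesis using lt(1,2) L_def by linarith
  qed
  obtain t0 where t0: "t0 < L" "(t0 = i0 \<and> Suc t0 mod L = j0) \<or> (t0 = j0 \<and> Suc t0 mod L = i0)"
    using edge[of i0 L j0] lt ad(1) L_def by blast
  obtain t1 where t1: "t1 < L" "(t1 = i1 \<and> Suc t1 mod L = j1) \<or> (t1 = j1 \<and> Suc t1 mod L = i1)"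
    using edge[of i1 L j1] lt ad(2) L_def by blast
  obtain t2 where t2: "t2 < L" "(t2 = i2 \<and> Suc t2 mod L = j2) \<or> (t2 = j2 \<and> Suc t2 mod L = i2)"
    using edge[of i2 L j2] lt ad(3) L_def by blast
  define g where "g i = (if t0 \<le> i then i - t0 else i + L - t0)" for i
  have g1: "g i < L" if "i < L" for i using that t0(1) unfolding g_def by (cases "t0 \<le> i") simp_all
  have g2: "(t0 + g i) mod L = i" if "i < L" for i
  proof (cases "t0 \<le> i")
    case True then show ?thesis using that unfolding g_def by simp
  next
    case False
    then have "t0 + g i = i + L" unfolding g_def using t0(1) by simp
    then show ?thesis using that by simp
  qed
  have ginj: "i = i'" if "i < L" "i' < L" "g i = g i'" for i i'
  proof -
    have "i = (t0 + g i) mod L" using g2[OF that(1)] by (rule sym)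
    also have "\<dots> = (t0 + g i') mod L" using that(3) by (rule arg_cong)
    also have "\<dots> = i'" using g2[OF that(2)] .
    finally show ?thesis .
  qed
  have g3: "g ((t0 + k) mod L) = k" if "k < L" for k
  proof -
    have "t0 + k < 2 * L" using that t0(1) by simp
    then have e: "(t0 + k) mod L = (if t0 + k < L then t0 + k else t0 + k - L)" by (rule mod_lt2)
    show ?thesis
    proof (cases "t0 + k < L")
      case True then show ?thesis unfolding e g_def by simp
    next
      case False
      then have "\<not> t0 \<le> t0 + k - L" using that by linarith
      then show ?thesis using False that unfolding e g_def by simp
    qed
  qed
  have gs: "g (Suc t mod L) = Suc (g t) mod L" if "t < L" for t
  proof (cases "Suc t = L")
    case True
    then have "g t = L - 1 - t0" unfolding g_def using t0(1) by simp
    moreover have "Suc (L - 1 - t0) mod L = (if t0 = 0 then 0 else Suc (L - 1 - t0))"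
      using t0(1) by (auto simp: mod_if)
    moreover have "g (Suc t mod L) = g 0" using True by simp
    moreover have "g 0 = (if t0 = 0 then 0 else L - t0)" unfolding g_def by simp
    ultimately show ?thesis using t0(1) by (simp add: Suc_diff_Suc)
  next
    case False
    then have st: "Suc t mod L = Suc t" using that by simp
    have "g t < L" using g1[OF that] .
    show ?thesis unfolding st
    proof (cases "t0 \<le> t")
      case True
      then have "g (Suc t) = Suc (g t)" unfolding g_def by simp
      moreover have "Suc (g t) < L" using True that False unfolding g_def by simp
      ultimately show "g (Suc t) = Suc (g t) mod L" by simp
    next
      case f2: False
      show "g (Suc t) = Suc (g t) mod L"
      proof (cases "Suc t = t0")
        case True
        then have "g (Suc t) = 0" unfolding g_def by simp
        moreover have "Suc (g t) = L" using True f2 unfolding g_def using t0(1) by simp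
        ultimately show ?thesis by simp
      next
        case False
        then have "g (Suc t) = Suc (g t)" using f2 t0(1) unfolding g_def by simp
        moreover have "Suc (g t) < L" using f2 False t0(1) unfolding g_def by simp
        ultimately show ?thesis by simp
      qed
    qed
  qed
  define w0 where "w0 = rotate t0 w"
  have lw0: "length w0 = L" unfolding w0_def L_def by simp
  have w0g: "w0 ! (g i) = w ! i" if "i < L" for i
    unfolding w0_def using nth_rotate[of "g i" w t0] g1[OF that] g2[OF that] L_def by simp
  have w0k: "w0 ! k = w ! ((t0 + k) mod L)" if "k < L" for k
    unfolding w0_def using nth_rotate[of k w t0] that L_def by simp
  have dist: "i0 \<noteq> i1" "i0 \<noteq> j1" "i0 \<noteq> i2" "i0 \<noteq> j2" "j0 \<noteq> i1" "j0 \<noteq> j1" "j0 \<noteq> i2" "j0 \<noteq> j2"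
    "i1 \<noteq> i2" "i1 \<noteq> j2" "j1 \<noteq> i2" "j1 \<noteq> j2" "i0 \<noteq> j0" "i1 \<noteq> j1" "i2 \<noteq> j2"
    using lw dc' ne by (metis)+
  define s where "s t = Suc t mod L" for t
  have E0: "{t0, s t0} = {i0, j0}" using t0(2) unfolding s_def by auto
  have E1: "{t1, s t1} = {i1, j1}" using t1(2) unfolding s_def by auto
  have E2: "{t2, s t2} = {i2, j2}" using t2(2) unfolding s_def by auto
  have sl: "s t < L" for t unfolding s_def using L2 by simp
  have dt: "distinct [t0, s t0, t1, s t1, t2, s t2]"
  proof -
    have "t0 \<noteq> s t0" "t1 \<noteq> s t1" "t2 \<noteq> s t2" using E0 E1 E2 dist(13-15) by auto
    moreover have "{t0, s t0} \<inter> {t1, s t1} = {}" "{t0, s t0} \<inter> {t2, s t2} = {}" "{t1, s t1} \<inter> {t2, s t2} = {}"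
      unfolding E0 E1 E2 using dist(1-12) by auto
    ultimately show ?thesis by auto
  qed
  define q where "q = g t1"
  define r where "r = g t2"
  have gt0: "g t0 = 0" unfolding g_def by simp
  have gst0: "g (s t0) = 1" unfolding s_def using gs[OF t0(1)] gt0 L2 by simp
  have gst1: "g (s t1) = Suc q mod L" unfolding s_def q_def using gs[OF t1(1)] .
  have gst2: "g (s t2) = Suc r mod L" unfolding s_def r_def using gs[OF t2(1)] .
  have dg: "distinct [g t0, g (s t0), g t1, g (s t1), g t2, g (s t2)]"
  proof -
    have "inj_on g {..<L}" by (rule inj_onI) (use ginj in auto)
    moreover have "set [t0, s t0, t1, s t1, t2, s t2] \<subseteq> {..<L}" using t0(1) t1(1) t2(1) sl by auto
    ultimately have "distinct (map g [t0, s t0, t1, s t1, t2, s t2])"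
      using dt by (simp only: distinct_map) (meson inj_on_subset)
    then show ?thesis by simp
  qed
  then have d6: "distinct [0, 1, q, Suc q mod L, r, Suc r mod L]"
    using gt0 gst0 gst1 gst2 unfolding q_def r_def by simp
  have A: "1 < q \<and> Suc q < L \<and> 1 < r \<and> Suc r < L \<and> Suc q mod L = Suc q \<and> Suc r mod L = Suc r \<and> (Suc q < r \<or> Suc r < q)"
    by (rule arith6[OF d6]) (use g1 t1(1) t2(1) L2 q_def r_def in auto)
  have W0a: "w0 ! 0 = w ! t0" using w0g[OF t0(1)] gt0 by simp
  have W0b: "w0 ! 1 = w ! s t0" using w0g[OF sl[of t0]] gst0 by simp
  have W0c: "w0 ! q = w ! t1" using w0g[OF t1(1)] q_def by simp
  have W0d: "w0 ! Suc q = w ! s t1" using w0g[OF sl[of t1]] gst1 A by simp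
  have W0e: "w0 ! r = w ! t2" using w0g[OF t2(1)] r_def by simp
  have W0f: "w0 ! Suc r = w ! s t2" using w0g[OF sl[of t2]] gst2 A by simp
  have B0: "(w0!0 = c0 \<and> w0!1 = c1) \<or> (w0!0 = c1 \<and> w0!1 = c0)"
    using t0(2) lw(1,2) unfolding W0a W0b s_def by auto
  have B1: "(w0!q = c1 \<and> w0!Suc q = c2) \<or> (w0!q = c2 \<and> w0!Suc q = c1)"
    using t1(2) lw(3,4) unfolding W0c W0d s_def by auto
  have B2: "(w0!r = c2 \<and> w0!Suc r = c0) \<or> (w0!r = c0 \<and> w0!Suc r = c2)"
    using t2(2) lw(5,6) unfolding W0e W0f s_def by auto
  have occ: "\<forall>k<length w0. w0!k \<in> {c0,c1,c2} \<longrightarrow> k \<in> {0, 1, q, Suc q, r, Suc r}"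
  proof (intro allI impI)
    fix k assume k: "k < length w0" "w0!k \<in> {c0,c1,c2}"
    define i where "i = (t0 + k) mod L"
    have il: "i < L" unfolding i_def using L2 by simp
    have wi: "w!i \<in> {c0,c1,c2}" using k w0k[of k] lw0 unfolding i_def by simp
    have "i \<in> {i0, j0, i1, j1, i2, j2}" using wi oc0[OF il] oc1[OF il] oc2[OF il] by auto
    then have "i \<in> {t0, s t0, t1, s t1, t2, s t2}" using E0 E1 E2 by blast
    then have "g i \<in> {g t0, g (s t0), g t1, g (s t1), g t2, g (s t2)}" by blast
    moreover have "g i = k" unfolding i_def using g3 k(1) lw0 by simp
    ultimately show "k \<in> {0, 1, q, Suc q, r, Suc r}"
      using gt0 gst0 gst1 gst2 A unfolding q_def r_def by simp
  qed
  have eq: "wequiv w w0" unfolding w0_def by (rule equiv_rotate)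
  have I: "interlaced w0 a b = interlaced w a b" for a b by (rule interlaced_equiv[OF eq])
  have "\<exists>ps w'. length ps \<le> 2 \<and> splice_seq w0 ps = Some w' \<and> reducible w'"
  proof (cases "Suc q < r")
    case True
    show ?thesis
      by (rule block[of c0 c1 c2 q r w0]) (use dc A True B0 B1 B2 occ lw0 sum I in simp_all)
  next
    case False
    then have qr: "Suc r < q" using A by simp
    show ?thesis
    proof (rule block[of c1 c0 c2 r q w0])
      show "distinct [c1, c0, c2]" using dc by auto
      show "of_bool (interlaced w0 c1 c0) + of_bool (interlaced w0 c0 c2) + of_bool (interlaced w0 c2 c1) = (2::nat)"
        using sum unfolding I by (simp add: interlaced_sym[of w c1 c0] interlaced_sym[of w c0 c2] interlaced_sym[of w c2 c1])
    qed (use A qr B0 B1 B2 occ lw0 in auto)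
  qed
  then obtain ps w0' where P: "length ps \<le> 2" "splice_seq w0 ps = Some w0'" "reducible w0'" by blast
  have cnt0: "\<forall>a\<in>set w0. count_list w0 a = 2"
    using cnt count_equiv[OF eq] set_equiv[OF eq] by simp
  obtain v' where V: "splice_seq w ps = Some v'" "wequiv w0' v'"
    using splice_seq_equiv[OF cnt0 equiv_sym[OF eq] P(2)] by blast
  have "reducible v'" using reducible_equiv[OF V(2)] P(3) by simp
  then show ?thesis using P(1) V(1) by blast
qed




context
  fixes w :: "'a list"
  assumes cnt: "\<forall>a\<in>set w. count_list w a = 2"
begin

lemma partner_props:
  assumes "i < length w"
  shows "partner w i < length w" "partner w i \<noteq> i" "w ! partner w i = w ! i"
proof -
  let ?a = "w ! i"
  have c: "count_list w ?a = 2" using cnt assms nth_mem by metis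
  let ?S = "{k. k < length w \<and> ?a = w!k}"
  have cS: "card ?S = 2" using c unfolding count_list_eq_length_filter length_filter_conv_card .
  then obtain u v where uv: "?S = {u, v}" "u \<noteq> v" by (metis card_2_iff)
  have "i \<in> ?S" using assms by simp
  then have "\<exists>j. j \<in> ?S \<and> j \<noteq> i" using uv by auto
  then obtain j where j: "j < length w" "j \<noteq> i" "w ! j = w ! i" by auto
  have uniq: "k = j" if "k < length w" "k \<noteq> i" "w ! k = w ! i" for k
  proof -
    have "k = j \<or> k = i" by (rule occ_two[OF c j(2) j(1) assms j(3) refl that(1) that(3)])
    then show ?thesis using that(2) by simp
  qed
  have "partner w i = j" unfolding partner_def
  proof (rule the_equality)
    show "j < length w \<and> j \<noteq> i \<and> w ! j = w ! i" using j by simp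
  next
    fix k assume "k < length w \<and> k \<noteq> i \<and> w ! k = w ! i"
    then show "k = j" by (elim conjE) (rule uniq)
  qed
  then show "partner w i < length w" "partner w i \<noteq> i" "w ! partner w i = w ! i" using j by auto
qed

lemma partner_unique:
  assumes "i < length w" "k < length w" "k \<noteq> i" "w ! k = w ! i"
  shows "partner w i = k"
proof -
  have c: "count_list w (w ! i) = 2" using cnt assms(1) nth_mem by metis
  have p: "partner w i < length w" "partner w i \<noteq> i" "w ! partner w i = w ! i"
    using partner_props[OF assms(1)] by auto
  show ?thesis
    using occ_two[OF c p(2) p(1) assms(1) p(3) refl assms(2) assms(4)] assms(3) by auto
qed

lemma partner_partner:
  assumes "i < length w"
  shows "partner w (partner w i) = i"
proof -
  have p: "partner w i < length w" "partner w i \<noteq> i" "w ! partner w i = w ! i"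
    using partner_props[OF assms] by auto
  show ?thesis by (rule partner_unique[OF p(1) assms not_sym[OF p(2)]]) (use p(3) in simp)
qed

end


lemma funpow_in:
  assumes "\<And>x. x \<in> D \<Longrightarrow> f x \<in> D" "x \<in> D"
  shows "(f ^^ n) x \<in> D"
  by (induction n) (use assms in auto)

lemma funpow_inj:
  assumes "\<And>x. x \<in> D \<Longrightarrow> f x \<in> D" "inj_on f D" "x \<in> D" "y \<in> D" "(f ^^ n) x = (f ^^ n) y"
  shows "x = y"
  using assms(3-5)
proof (induction n arbitrary: x y)
  case 0 then show ?case by simp
next
  case (Suc n)
  have "(f ^^ n) (f x) = (f ^^ n) (f y)" using Suc.prems(3) by (simp add: funpow_Suc_right del: funpow.simps)
  then have "f x = f y" using Suc.IH assms(1) Suc.prems(1,2) by blast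
  then show ?case using assms(2) Suc.prems(1,2) by (meson inj_onD)
qed

lemma funpow_period:
  assumes "(f ^^ p) d = d"
  shows "(f ^^ k) d = (f ^^ (k mod p)) d"
proof -
  have m: "(f ^^ (p * m)) d = d" for m
  proof (induction m)
    case 0 then show ?case by simp
  next
    case (Suc m)
    have "(f ^^ (p * Suc m)) d = (f ^^ p) ((f ^^ (p * m)) d)"
      by (simp add: funpow_add)
    then show ?case using Suc assms by simp
  qed
  have "(f ^^ k) d = (f ^^ (k mod p + p * (k div p))) d" by simp
  also have "\<dots> = (f ^^ (k mod p)) ((f ^^ (p * (k div p))) d)" by (simp only: funpow_add o_apply)
  also have "\<dots> = (f ^^ (k mod p)) d" using m by simp
  finally show ?thesis .
qed

lemma orbit3:
  assumes D: "\<And>x. x \<in> D \<Longrightarrow> f x \<in> D" and inj: "inj_on f D" and d: "d \<in> D"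
    and c: "card {(f ^^ k) d | k. True} = 3"
  shows "(f ^^ 3) d = d \<and> {(f ^^ k) d | k. True} = {d, f d, f (f d)}"
proof -
  let ?h = "\<lambda>k. (f ^^ k) d"
  let ?R = "{(f ^^ k) d | k. True}"
  have fin: "finite ?R" using c by (metis card.infinite zero_neq_numeral)
  have sub: "?h ` {0..3} \<subseteq> ?R" by auto
  have "\<not> inj_on ?h {0..3}"
  proof
    assume "inj_on ?h {0..3}"
    then have "card {0..(3::nat)} \<le> card ?R" using card_inj_on_le[OF _ sub fin] by blast
    then show False using c by simp
  qed
  then obtain i j where ij: "i \<in> {0..3}" "j \<in> {0..3}" "i \<noteq> j" "?h i = ?h j"
    unfolding inj_on_def by blast
  obtain a b where ab: "a < b" "b \<le> 3" "?h a = ?h b"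
  proof (cases "i < j")
    case True then show ?thesis using that[of i j] ij by auto
  next
    case False then show ?thesis using that[of j i] ij by auto
  qed
  define p where "p = b - a"
  have p0: "0 < p" "p \<le> 3" using ab unfolding p_def by auto
  have "(f ^^ a) ((f ^^ p) d) = (f ^^ (a + p)) d" by (simp add: funpow_add)
  also have "a + p = b" unfolding p_def using ab(1) by simp
  finally have "(f ^^ a) ((f ^^ p) d) = (f ^^ a) d" using ab(3) by simp
  have per: "(f ^^ p) d = d"
  proof -
    have "(f ^^ p) d \<in> D" using funpow_in[of D f d p] D d by blast
    then show ?thesis using funpow_inj[of D f "(f ^^ p) d" d a] D inj d \<open>(f ^^ a) ((f ^^ p) d) = (f ^^ a) d\<close> by blast
  qed
  have "?R \<subseteq> ?h ` {..<p}"
  proof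
    fix x assume "x \<in> ?R"
    then obtain k where "x = ?h k" by blast
    then have "x = ?h (k mod p)" using funpow_period[OF per] by simp
    moreover have "k mod p < p" using p0 by simp
    ultimately show "x \<in> ?h ` {..<p}" by blast
  qed
  then have "card ?R \<le> card (?h ` {..<p})" by (intro card_mono) auto
  also have "\<dots> \<le> p" using card_image_le[of "{..<p}" ?h] by simp
  finally have p3: "p = 3" using c p0 by simp
  have "?R \<subseteq> ?h ` {..<3}" using \<open>?R \<subseteq> ?h ` {..<p}\<close> p3 by simp
  moreover have "?h ` {..<3} = {d, f d, f (f d)}" by (auto simp: numeral_3_eq_3 lessThan_Suc)
  moreover have "{d, f d, f (f d)} \<subseteq> ?R"
  proof -
    have "d = ?h 0" "f d = ?h 1" "f (f d) = ?h 2" by (auto simp: numeral_2_eq_2)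
    then show ?thesis by blast
  qed
  ultimately show ?thesis using per p3 by auto
qed


lemma alpha_props:
  assumes "d \<in> darts w"
  shows "alpha w d \<in> darts w"
    "fst (alpha w d) = Suc (fst d) mod length w \<or> fst d = Suc (fst (alpha w d)) mod length w"
proof -
  obtain i b where d: "d = (i, b)" by (cases d)
  have i: "i < length w" using assms d unfolding darts_def by simp
  have L0: "0 < length w" using i by (cases w) auto
  show "alpha w d \<in> darts w" using i L0 unfolding darts_def alpha_def d Let_def by auto
  show "fst (alpha w d) = Suc (fst d) mod length w \<or> fst d = Suc (fst (alpha w d)) mod length w"
  proof (cases b)
    case True then show ?thesis unfolding alpha_def d Let_def by simp
  next
    case False
    have "i = Suc ((i + length w - 1) mod length w) mod length w"
    proof (cases i)
      case 0
      then have "(i + length w - 1) mod length w = length w - 1" using i by simp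
      then show ?thesis using 0 i by simp
    next
      case (Suc m)
      then have "(i + length w - 1) mod length w = m" using i by simp
      then show ?thesis using Suc i by simp
    qed
    then show ?thesis using False unfolding alpha_def d Let_def by simp
  qed
qed

lemma alpha_inj: "inj_on (alpha w) (darts w)"
proof (rule inj_onI)
  fix d d' assume dd: "d \<in> darts w" "d' \<in> darts w" "alpha w d = alpha w d'"
  obtain i b where d: "d = (i, b)" by (cases d)
  obtain i' b' where d': "d' = (i', b')" by (cases d')
  have i: "i < length w" "i' < length w" using dd d d' unfolding darts_def by auto
  have bb: "b = b'" using dd(3) unfolding d d' alpha_def Let_def by (auto split: if_splits)
  show "d = d'"
  proof (cases b)
    case True
    then have "Suc i mod length w = Suc i' mod length w" using dd(3) bb unfolding d d' alpha_def Let_def by simp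
    then have "i = i'" using i by (auto simp: mod_Suc split: if_splits)
    then show ?thesis using d d' bb by simp
  next
    case False
    then have e: "(i + length w - 1) mod length w = (i' + length w - 1) mod length w"
      using dd(3) bb unfolding d d' alpha_def Let_def by simp
    have m: "(k + length w - 1) mod length w = (if k = 0 then length w - 1 else k - 1)" if "k < length w" for k
    proof (cases k)
      case 0 then show ?thesis using that by simp
    next
      case (Suc m) then show ?thesis using that by simp
    qed
    have "i = i'" using e m[OF i(1)] m[OF i(2)] i by (auto split: if_splits)
    then show ?thesis using d d' bb by simp
  qed
qed

lemma sum_perm:
  fixes h :: "'a \<Rightarrow> 'a \<Rightarrow> nat"
  assumes hs: "\<And>u v. h u v = h v u"
    and "distinct [x, y, z]" "distinct [a, b, c]" "{x, y, z} = {a, b, c}"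
  shows "h x y + h y z + h z x = h a b + h b c + h c a"
proof -
  have "x \<in> {a,b,c}" "y \<in> {a,b,c}" "z \<in> {a,b,c}" using assms(4) by auto
  then show ?thesis using assms(2,3)
    by (auto simp: hs[of b a] hs[of c b] hs[of a c])
qed


context
  fixes w :: "'a list"
  assumes cnt: "\<forall>a\<in>set w. count_list w a = 2"
begin

lemma sigma_pair: "sigma w s (i, b) = (partner w i, if b then \<not> s i else s i)"
  unfolding sigma_def by simp

lemma sigma_darts: "d \<in> darts w \<Longrightarrow> sigma w s d \<in> darts w"
  using partner_props[OF cnt] unfolding darts_def sigma_def by (cases d) auto

lemma sigma_inj: "inj_on (sigma w s) (darts w)"
proof (rule inj_onI)
  fix d d' assume dd: "d \<in> darts w" "d' \<in> darts w" "sigma w s d = sigma w s d'"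
  obtain i b where d: "d = (i, b)" by (cases d)
  obtain i' b' where d': "d' = (i', b')" by (cases d')
  have i: "i < length w" "i' < length w" using dd d d' unfolding darts_def by auto
  have "partner w i = partner w i'" using dd(3) unfolding d d' sigma_def by simp
  then have ii: "i = i'" using partner_partner[OF cnt i(1)] partner_partner[OF cnt i(2)] by metis
  have "(if b then \<not> s i else s i) = (if b' then \<not> s i' else s i')" using dd(3) unfolding d d' sigma_pair by simp
  then have "b = b'" using ii by (cases b; cases b'; simp)
  then show "d = d'" using d d' ii by simp
qed

lemma fp_darts: "d \<in> darts w \<Longrightarrow> face_perm w s d \<in> darts w"
  unfolding face_perm_def using sigma_darts[OF alpha_props(1)] by simp

lemma fp_inj: "inj_on (face_perm w s) (darts w)"
  unfolding face_perm_def
proof (rule comp_inj_on)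
  show "inj_on (alpha w) (darts w)" by (rule alpha_inj)
  show "inj_on (sigma w s) (alpha w ` darts w)"
    by (rule inj_on_subset[OF sigma_inj]) (use alpha_props(1) in auto)
qed

lemma fp_fst: "fst (face_perm w s d) = partner w (fst (alpha w d))"
  unfolding face_perm_def sigma_def by simp

end

theorem mainTheorem4:
  fixes w :: "'a list" and s :: "nat \<Rightarrow> bool"
  assumes "spherical_curve w s"
    and "\<exists>R. trigon_type_A w s R"
  shows "reductivity w \<le> 2"
proof -
  have cnt: "\<forall>a\<in>set w. count_list w a = 2" using assms(1) unfolding spherical_curve_def by blast
  obtain R where T: "trigon_type_A w s R" using assms(2) by blast
  then have Rr: "R \<in> regions w s" "card R = 3" unfolding trigon_type_A_def is_trigon_def by auto
  obtain x y z where X: "distinct [x, y, z]" "trigon_crossings w R = {x, y, z}"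
    "of_bool (interlaced w x y) + of_bool (interlaced w y z) + of_bool (interlaced w z x) = (2::nat)"
    using T unfolding trigon_type_A_def by blast
  obtain d where d: "d \<in> darts w" "R = face_of w s d" using Rr(1) unfolding regions_def by blast
  define f where "f = face_perm w s"
  have Rf: "R = {(f ^^ k) d | k. True}" unfolding d(2) face_of_def f_def ..
  have D: "\<And>x. x \<in> darts w \<Longrightarrow> f x \<in> darts w" unfolding f_def by (rule fp_darts[OF cnt])
  have inj: "inj_on f (darts w)" unfolding f_def by (rule fp_inj[OF cnt])
  have o3: "(f ^^ 3) d = d \<and> {(f ^^ k) d | k. True} = {d, f d, f (f d)}"
  proof -
    have c3: "card {(f ^^ k) d | k. True} = 3" using Rr(2) unfolding Rf .
    show ?thesis using orbit3[where D="darts w" and f=f and d=d] D inj d(1) c3 by blast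
  qed
  define d1 where "d1 = f d"
  define d2 where "d2 = f d1"
  have fd2: "f d2 = d" using o3 unfolding d1_def d2_def by (simp add: numeral_3_eq_3)
  have R3: "R = {d, d1, d2}" using o3 Rf unfolding d1_def d2_def by simp
  have dd: "d1 \<in> darts w" "d2 \<in> darts w" unfolding d1_def d2_def using D d(1) by auto
  define i0 where "i0 = fst d"
  define i1 where "i1 = fst d1"
  define i2 where "i2 = fst d2"
  define j0 where "j0 = fst (alpha w d)"
  define j1 where "j1 = fst (alpha w d1)"
  define j2 where "j2 = fst (alpha w d2)"
  have lt: "i0 < length w" "j0 < length w" "i1 < length w" "j1 < length w" "i2 < length w" "j2 < length w"
    unfolding i0_def i1_def i2_def j0_def j1_def j2_def
    using d(1) dd alpha_props(1)[OF d(1)] alpha_props(1)[OF dd(1)] alpha_props(1)[OF dd(2)]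
    unfolding darts_def by auto
  have pi: "i1 = partner w j0" "i2 = partner w j1" "i0 = partner w j2"
    unfolding i0_def i1_def i2_def j0_def j1_def j2_def
    using fp_fst[OF cnt, of s d] fp_fst[OF cnt, of s d1] fp_fst[OF cnt, of s d2] fd2
    unfolding d1_def d2_def f_def by simp_all
  define c0 where "c0 = w ! i0"
  define c1 where "c1 = w ! i1"
  define c2 where "c2 = w ! i2"
  have pj: "w ! j0 = c1" "w ! j1 = c2" "w ! j2 = c0"
    unfolding c0_def c1_def c2_def pi using partner_props(3)[OF cnt] lt by auto
  have ne: "j0 \<noteq> i1" "j1 \<noteq> i2" "j2 \<noteq> i0"
    unfolding pi using not_sym[OF partner_props(2)[OF cnt lt(2)]] not_sym[OF partner_props(2)[OF cnt lt(4)]]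
      not_sym[OF partner_props(2)[OF cnt lt(6)]] by simp_all
  have ad: "j0 = Suc i0 mod length w \<or> i0 = Suc j0 mod length w"
           "j1 = Suc i1 mod length w \<or> i1 = Suc j1 mod length w"
           "j2 = Suc i2 mod length w \<or> i2 = Suc j2 mod length w"
    unfolding i0_def i1_def i2_def j0_def j1_def j2_def
    using alpha_props(2)[OF d(1)] alpha_props(2)[OF dd(1)] alpha_props(2)[OF dd(2)] by auto
  have tc: "trigon_crossings w R = {c0, c1, c2}"
    unfolding trigon_crossings_def R3 c0_def c1_def c2_def i0_def i1_def i2_def by simp
  have cxyz: "{c0, c1, c2} = {x, y, z}" using tc X(2) by simp
  have "card {c0, c1, c2} = 3" using cxyz X(1) by simp
  then have dc: "distinct [c0, c1, c2]"
    by (cases "c0 = c1"; cases "c1 = c2"; cases "c0 = c2") (auto simp: card_insert_if)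
  have sum: "of_bool (interlaced w c0 c1) + of_bool (interlaced w c1 c2) + of_bool (interlaced w c2 c0) = (2::nat)"
  proof -
    have "of_bool (interlaced w x y) + of_bool (interlaced w y z) + of_bool (interlaced w z x)
        = of_bool (interlaced w c0 c1) + of_bool (interlaced w c1 c2) + (of_bool (interlaced w c2 c0) :: nat)"
    proof (rule sum_perm[where h = "\<lambda>u v. of_bool (interlaced w u v)"])
      show "\<And>u v. of_bool (interlaced w u v) = (of_bool (interlaced w v u) :: nat)"
      proof -
        fix u v show "of_bool (interlaced w u v) = (of_bool (interlaced w v u) :: nat)"
          using interlaced_sym[of w u v] by simp
      qed
    qed (use X(1) dc cxyz in auto)
    then show ?thesis using X(3) by simp
  qed
  have "\<exists>ps w'. length ps \<le> 2 \<and> splice_seq w ps = Some w' \<and> reducible w'"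
    by (rule core[OF cnt dc lt _ pj(1) _ pj(2) _ pj(3) ad ne sum])
       (simp_all add: c0_def c1_def c2_def)
  then obtain ps w' where P: "length ps \<le> 2" "splice_seq w ps = Some w'" "reducible w'" by blast
  have "reductivity w \<le> length ps"
    unfolding reductivity_def by (rule Least_le) (use P in blast)
  then show ?thesis using P(1) by simp
qed


end
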